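(* Let $K$ be a polyhedral cone with nonempty interior in a finite dimensional real Banach space $X$, and let $\mathrm{id}$ be the identity on $X$. Let $f:\operatorname{int}K\to\operatorname{int}K$ be order-preserving and homogeneous, and let $g=f+\mathrm{id}$. If $f$ has an eigenvector in $\operatorname{int}K$, then for every $x\in\operatorname{int}K$, $g^k(x)/\|g^k(x)\|$ converges as $k\to\infty$ to an eigenvector of $f$.
   Context: A closed cone is a closed convex set $K$ with $tK\subseteq K$ for $t>0$ and $K\cap(-K)=\{0\}$; it is polyhedral if it is the convex hull of finitely many rays from the origin. The order is $x\le_K y$ iff $y-x\in K$. Order-preserving: $x\le_K y\Rightarrow f(x)\le_K f(y)$; homogeneous: $f(tx)=tf(x)$ for $t>0$. An eigenvector of $f$ is $x$ with $f(x)=\mu x$ for some $\mu$. *)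

theory Defs
  imports "HOL-Analysis.Analysis"
begin

text \<open>Finite-dimensional real normed space (automatically Banach).\<close>
definition fin_dim_space :: "'a::real_normed_vector itself \<Rightarrow> bool" where
  "fin_dim_space _ \<longleftrightarrow> (\<exists>B::'a set. finite B \<and> span B = UNIV)"

definition closed_cone :: "'a::real_normed_vector set \<Rightarrow> bool" where
  "closed_cone K \<longleftrightarrow> closed K \<and> convex K \<and> (\<forall>t>0. (\<lambda>x. t *\<^sub>R x) ` K \<subseteq> K)
     \<and> K \<inter> uminus ` K = {0}"

definition polyhedral_cone :: "'a::real_normed_vector set \<Rightarrow> bool" where
  "polyhedral_cone K \<longleftrightarrow> closed_cone K \<and>
     (\<exists>S. finite S \<and> K = convex hull (\<Union>v\<in>S. {t *\<^sub>R v |t. t \<ge> 0}))"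

definition cone_le :: "'a::real_normed_vector set \<Rightarrow> 'a \<Rightarrow> 'a \<Rightarrow> bool" where
  "cone_le K x y \<longleftrightarrow> y - x \<in> K"

end

theory Submission
  imports Defs
begin

lemma bw_span:
  fixes B :: "'a::real_normed_vector set"
  assumes "finite B"
  shows "\<And>s::nat\<Rightarrow>'a. (\<forall>n. s n \<in> span B) \<Longrightarrow> bounded (range s) \<Longrightarrow>
     \<exists>l\<in>span B. \<exists>r. strict_mono r \<and> (s \<circ> r) \<longlonglongrightarrow> l"
  using assms
proof (induction B rule: finite_induct)
  case empty
  then have "\<forall>n. s n = 0" by simp
  then have "(s \<circ> id) \<longlonglongrightarrow> 0" by (simp add: o_def)
  then show ?case by (intro bexI[of _ 0] exI[of _ id]) (auto simp: strict_mono_def span_zero)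
next
  case (insert e B)
  show ?case
  proof (cases "e \<in> span B")
    case True
    then show ?thesis using insert by (simp add: span_redundant)
  next
    case False
    have clo: "closed (span B)"
    proof (rule closed_sequential_limits[THEN iffD2], intro allI impI)
      fix x l assume h: "(\<forall>n. x n \<in> span B) \<and> x \<longlonglongrightarrow> l"
      then have "bounded (range x)" using convergent_imp_bounded by blast
      then obtain l' r where "l' \<in> span B" "strict_mono r" "(x \<circ> r) \<longlonglongrightarrow> l'"
        using insert.IH h by blast
      moreover have "(x \<circ> r) \<longlonglongrightarrow> l" using h LIMSEQ_subseq_LIMSEQ \<open>strict_mono r\<close> by blast
      ultimately show "l \<in> span B" using LIMSEQ_unique by metis
    qed
    define d where "d = infdist e (span B)"
    have dpos: "d > 0" unfolding d_def
      using infdist_pos_not_in_closed[OF clo _ False] span_zero by blast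
    have bnd: "\<bar>t\<bar> * d \<le> norm z" if "z - t *\<^sub>R e \<in> span B" for z t
    proof (cases "t = 0")
      case True then show ?thesis by simp
    next
      case False
      define p where "p = - (inverse t) *\<^sub>R (z - t *\<^sub>R e)"
      have p: "p \<in> span B" unfolding p_def using that span_mul by blast
      have "z = t *\<^sub>R (e - p)" unfolding p_def using False
        by (simp add: algebra_simps)
      then have "norm z = \<bar>t\<bar> * dist e p" by (simp add: dist_norm)
      moreover have "d \<le> dist e p" unfolding d_def using infdist_le[OF p] .
      ultimately show ?thesis by (simp add: mult_left_mono)
    qed
    obtain t where t: "\<And>n. s n - t n *\<^sub>R e \<in> span B"
    proof -
      have "\<forall>n. \<exists>k. s n - k *\<^sub>R e \<in> span B" using insert.prems(1) span_breakdown_eq by blast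
      then show ?thesis using that by metis
    qed
    obtain Bs where Bs: "\<And>n. norm (s n) \<le> Bs"
      using insert.prems(2) by (meson bounded_iff rangeI)
    have "\<bar>t n\<bar> \<le> Bs / d" for n
      using bnd[OF t[of n]] Bs[of n] dpos by (simp add: pos_le_divide_eq)
    then have "bounded (range t)" by (metis bounded_iff rangeE real_norm_def)
    then obtain lt r1 where r1: "strict_mono r1" "(t \<circ> r1) \<longlonglongrightarrow> lt"
      using bounded_imp_convergent_subsequence by blast
    define w where "w n = s (r1 n) - t (r1 n) *\<^sub>R e" for n
    have wB: "\<forall>n. w n \<in> span B" using t unfolding w_def by simp
    have "norm (w n) \<le> Bs + (Bs / d) * norm e" for n
    proof -
      have "norm (w n) \<le> norm (s (r1 n)) + \<bar>t (r1 n)\<bar> * norm e"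
        unfolding w_def by (metis norm_scaleR norm_triangle_ineq4)
      also have "\<dots> \<le> Bs + (Bs / d) * norm e"
        using Bs \<open>\<And>n. \<bar>t n\<bar> \<le> Bs / d\<close> by (intro add_mono mult_right_mono) auto
      finally show ?thesis .
    qed
    then have "bounded (range w)" by (metis bounded_iff rangeE)
    then obtain lw r2 where lw: "lw \<in> span B" "strict_mono r2" "(w \<circ> r2) \<longlonglongrightarrow> lw"
      using insert.IH wB by blast
    have tr: "((t \<circ> r1) \<circ> r2) \<longlonglongrightarrow> lt" using r1(2) lw(2) LIMSEQ_subseq_LIMSEQ by blast
    have "(\<lambda>n. w (r2 n) + t (r1 (r2 n)) *\<^sub>R e) \<longlonglongrightarrow> lw + lt *\<^sub>R e"
      using lw(3) tr by (intro tendsto_intros) (auto simp: o_def)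
    moreover have "(\<lambda>n. w (r2 n) + t (r1 (r2 n)) *\<^sub>R e) = s \<circ> (r1 \<circ> r2)"
      unfolding w_def by (auto simp: o_def)
    moreover have "strict_mono (r1 \<circ> r2)" using r1(1) lw(2) strict_mono_o by blast
    moreover have "lw + lt *\<^sub>R e \<in> span (insert e B)"
      using lw(1) by (meson span_add span_base span_mono span_mul insertI1 subset_insertI subsetD)
    ultimately show ?thesis by metis
  qed
qed

lemma bw_fin:
  fixes s :: "nat \<Rightarrow> 'a::real_normed_vector"
  assumes "fin_dim_space TYPE('a)" "bounded (range s)"
  shows "\<exists>l r. strict_mono r \<and> (s \<circ> r) \<longlonglongrightarrow> l"
proof -
  obtain B :: "'a set" where "finite B" "span B = UNIV" using assms(1) unfolding fin_dim_space_def by blast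
  then show ?thesis using bw_span[of B s] assms(2) by auto
qed


locale cone0 =
  fixes K :: "'a::real_normed_vector set"
  assumes fd: "fin_dim_space TYPE('a)" and clo: "closed K" and cvx: "convex K"
   and scl: "\<forall>t>0. (\<lambda>x. t *\<^sub>R x) ` K \<subseteq> K" and pnt: "K \<inter> uminus ` K = {0}"
   and nz: "0 \<notin> interior K"
begin

lemma K0: "0 \<in> K" using pnt by blast

lemma Kscale: "t \<ge> 0 \<Longrightarrow> x \<in> K \<Longrightarrow> t *\<^sub>R x \<in> K"
proof (cases "t = 0")
  case True then show ?thesis using K0 by simp
next
  case False
  assume "t \<ge> 0" "x \<in> K"
  then have "t > 0" using False by simp
  then show ?thesis using scl \<open>x \<in> K\<close> by blast
qed

lemma Kadd: "x \<in> K \<Longrightarrow> y \<in> K \<Longrightarrow> x + y \<in> K"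
proof -
  assume "x \<in> K" "y \<in> K"
  then have "(1/2) *\<^sub>R x + (1/2) *\<^sub>R y \<in> K" using convexD[OF cvx] by simp
  then have "2 *\<^sub>R ((1/2) *\<^sub>R x + (1/2) *\<^sub>R y) \<in> K" using Kscale by simp
  then show ?thesis by (simp add: scaleR_add_right)
qed

lemma Kanti: "x \<in> K \<Longrightarrow> -x \<in> K \<Longrightarrow> x = 0"
proof -
  assume "x \<in> K" "-x \<in> K"
  then have "x \<in> uminus ` K" by (metis image_eqI minus_minus)
  then show ?thesis using \<open>x \<in> K\<close> pnt by blast
qed

lemma intK: "a \<in> interior K \<Longrightarrow> a \<in> K" using interior_subset by blast

lemma int_ball: "a \<in> interior K \<Longrightarrow> \<exists>e>0. \<forall>v. norm v < e \<longrightarrow> a + v \<in> K"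
proof -
  assume "a \<in> interior K"
  then obtain e where "e > 0" "ball a e \<subseteq> K" using mem_interior by blast
  then show ?thesis by (intro exI[of _ e]) (auto simp: dist_norm subset_iff)
qed

lemma int_add: "a \<in> interior K \<Longrightarrow> k \<in> K \<Longrightarrow> a + k \<in> interior K"
proof -
  assume a: "a \<in> interior K" and k: "k \<in> K"
  then obtain e where "e > 0" "ball a e \<subseteq> K" using mem_interior by blast
  have "ball (a + k) e \<subseteq> K"
  proof
    fix z assume "z \<in> ball (a + k) e"
    then have "z - k \<in> ball a e" by (simp add: dist_norm algebra_simps)
    then have "z - k \<in> K" using \<open>ball a e \<subseteq> K\<close> by blast
    then show "z \<in> K" using Kadd[OF _ k] by fastforce
  qed
  then show ?thesis using \<open>e > 0\<close> mem_interior by blast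
qed

lemma int_scale: "t > 0 \<Longrightarrow> a \<in> interior K \<Longrightarrow> t *\<^sub>R a \<in> interior K"
proof -
  assume t: "t > 0" and a: "a \<in> interior K"
  then obtain e where "e > 0" "ball a e \<subseteq> K" using mem_interior by blast
  have "ball (t *\<^sub>R a) (t * e) \<subseteq> K"
  proof
    fix z assume "z \<in> ball (t *\<^sub>R a) (t * e)"
    then have "dist (t *\<^sub>R a) z < t * e" by simp
    moreover have "dist (t *\<^sub>R a) z = t * dist a (inverse t *\<^sub>R z)"
    proof -
      have "t *\<^sub>R a - z = t *\<^sub>R (a - inverse t *\<^sub>R z)" using t by (simp add: scaleR_diff_right)
      then show ?thesis using t by (simp add: dist_norm)
    qed
    ultimately have "dist a (inverse t *\<^sub>R z) < e" using t by simp
    then have "inverse t *\<^sub>R z \<in> K" using \<open>ball a e \<subseteq> K\<close> by auto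
    then show "z \<in> K" using Kscale[of t "inverse t *\<^sub>R z"] t by simp
  qed
  then show ?thesis using \<open>e > 0\<close> t mem_interior by (meson mult_pos_pos)
qed

lemma int_nz: "a \<in> interior K \<Longrightarrow> a \<noteq> 0" using nz by blast

lemma normal: "\<exists>C>0. \<forall>a b. a \<in> K \<longrightarrow> b - a \<in> K \<longrightarrow> norm a \<le> C * norm b"
proof (rule ccontr)
  assume neg: "\<not> ?thesis"
  have "\<forall>n::nat. \<exists>a b. a \<in> K \<and> b - a \<in> K \<and> norm a > (real n + 1) * norm b"
  proof
    fix n :: nat
    have "real n + 1 > 0" by simp
    then have "\<not> (\<forall>a b. a \<in> K \<longrightarrow> b - a \<in> K \<longrightarrow> norm a \<le> (real n + 1) * norm b)"
      using neg by blast
    then show "\<exists>a b. a \<in> K \<and> b - a \<in> K \<and> norm a > (real n + 1) * norm b" by (auto simp: not_le)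
  qed
  then obtain a b where ab: "\<And>n. a n \<in> K" "\<And>n. b n - a n \<in> K" "\<And>n. norm (a n) > (real n + 1) * norm (b n)"
    by metis
  have anz: "a n \<noteq> 0" for n
  proof -
    have "0 \<le> (real n + 1) * norm (b n)" by simp
    then have "norm (a n) > 0" using ab(3)[of n] by linarith
    then show ?thesis by auto
  qed
  define a' where "a' n = inverse (norm (a n)) *\<^sub>R a n" for n
  define b' where "b' n = inverse (norm (a n)) *\<^sub>R b n" for n
  have na': "norm (a' n) = 1" for n using anz by (simp add: a'_def)
  have a'K: "a' n \<in> K" for n unfolding a'_def using Kscale ab(1) by simp
  have b'K: "b' n - a' n \<in> K" for n unfolding a'_def b'_def
    using Kscale[OF _ ab(2)[of n], of "inverse (norm (a n))"] by (simp add: scaleR_diff_right)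
  have nb': "norm (b' n) \<le> inverse (real n + 1)" for n
  proof -
    have "norm (b' n) = norm (b n) / norm (a n)" by (simp add: b'_def divide_inverse mult.commute)
    also have "\<dots> \<le> inverse (real n + 1)"
      using ab(3)[of n] anz by (simp add: divide_le_eq field_simps)
    finally show ?thesis .
  qed
  have "b' \<longlonglongrightarrow> 0"
  proof (rule Lim_null_comparison[OF _ LIMSEQ_inverse_real_of_nat])
    show "\<forall>\<^sub>F n in sequentially. norm (b' n) \<le> inverse (real (Suc n))"
      using nb' by (simp add: add.commute)
  qed
  have "bounded (range a')" using na' by (metis bounded_iff order_refl rangeE)
  then obtain l r where r: "strict_mono r" "(a' \<circ> r) \<longlonglongrightarrow> l" using bw_fin[OF fd] by blast
  have "(\<lambda>n. norm ((a' \<circ> r) n)) \<longlonglongrightarrow> norm l" using r(2) by (rule tendsto_norm)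
  then have "norm l = 1" using na' by (simp add: o_def LIMSEQ_const_iff)
  have lK: "l \<in> K" using closed_sequentially[OF clo _ r(2)] a'K by simp
  have "(\<lambda>n. b' (r n) - (a' \<circ> r) n) \<longlonglongrightarrow> 0 - l"
    using LIMSEQ_subseq_LIMSEQ[OF \<open>b' \<longlonglongrightarrow> 0\<close> r(1)] r(2) by (intro tendsto_diff) (auto simp: o_def)
  then have "-l \<in> K" using closed_sequentially[OF clo, of "\<lambda>n. b' (r n) - a' (r n)"] b'K by simp
  then have "l = 0" using Kanti lK by blast
  then show False using \<open>norm l = 1\<close> by simp
qed

definition Mf :: "'a \<Rightarrow> 'a \<Rightarrow> real" where
  "Mf a b = Inf {t. t *\<^sub>R b - a \<in> K}"

lemma Mf_ex: "b \<in> interior K \<Longrightarrow> \<exists>t. t *\<^sub>R b - a \<in> K"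
proof -
  assume b: "b \<in> interior K"
  then obtain e where e: "e > 0" "\<And>v. norm v < e \<Longrightarrow> b + v \<in> K" using int_ball by blast
  show ?thesis
  proof (cases "a = 0")
    case True then show ?thesis using intK[OF b] by (intro exI[of _ 1]) simp
  next
    case False
    define s where "s = e / (2 * norm a)"
    have s: "s > 0" using e False by (simp add: s_def)
    have "norm (- (s *\<^sub>R a)) < e" using e False by (simp add: s_def)
    then have "b - s *\<^sub>R a \<in> K" using e(2) by fastforce
    then have "inverse s *\<^sub>R (b - s *\<^sub>R a) \<in> K" using Kscale s by simp
    then show ?thesis using s by (intro exI[of _ "inverse s"]) (simp add: scaleR_diff_right)
  qed
qed

lemma Mf_nonneg_aux: "a \<in> K \<Longrightarrow> b \<in> interior K \<Longrightarrow> t *\<^sub>R b - a \<in> K \<Longrightarrow> t \<ge> 0"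
proof (rule ccontr)
  assume a: "a \<in> K" and b: "b \<in> interior K" and v: "t *\<^sub>R b - a \<in> K" and "\<not> t \<ge> 0"
  then have t: "t < 0" by simp
  have "(-t) *\<^sub>R b \<in> K" using Kscale[of "-t" b] intK[OF b] t by simp
  then have "a + (-t) *\<^sub>R b \<in> K" using Kadd[OF a] by blast
  then have "- (t *\<^sub>R b - a) \<in> K" by (simp add: algebra_simps)
  then have "t *\<^sub>R b - a = 0" using Kanti v by blast
  then have "a = t *\<^sub>R b" by simp
  then have "-a \<in> K" using Kscale[OF _ intK[OF b], of "-t"] t by simp
  then have "a = 0" using Kanti a by blast
  then have "b = 0" using \<open>a = t *\<^sub>R b\<close> t by simp
  then show False using b nz by simp
qed

lemma Mf_props:
  assumes a: "a \<in> K" and b: "b \<in> interior K"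
  shows "Mf a b *\<^sub>R b - a \<in> K" "Mf a b \<ge> 0" "\<And>t. t *\<^sub>R b - a \<in> K \<Longrightarrow> Mf a b \<le> t"
proof -
  let ?S = "{t. t *\<^sub>R b - a \<in> K}"
  have ne: "?S \<noteq> {}" using Mf_ex[OF b] by blast
  have bdd: "bdd_below ?S" by (rule bdd_belowI[of _ 0]) (auto intro: Mf_nonneg_aux[OF a b])
  have "?S = (\<lambda>t. t *\<^sub>R b - a) -` K" by auto
  moreover have "closed ((\<lambda>t. t *\<^sub>R b - a) -` K)"
    by (rule continuous_closed_vimage[OF clo]) (intro continuous_intros)
  ultimately have "closed ?S" by simp
  then have "Inf ?S \<in> ?S" using closed_contains_Inf[OF ne bdd] by blast
  then show "Mf a b *\<^sub>R b - a \<in> K" unfolding Mf_def by simp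
  then show "Mf a b \<ge> 0" by (rule Mf_nonneg_aux[OF a b])
  show "\<And>t. t *\<^sub>R b - a \<in> K \<Longrightarrow> Mf a b \<le> t" unfolding Mf_def using cInf_lower[OF _ bdd] by simp
qed

lemma Mf_pos:
  assumes a: "a \<in> interior K" and b: "b \<in> interior K"
  shows "Mf a b > 0"
proof -
  have "Mf a b \<ge> 0" using Mf_props intK a b by blast
  moreover have "Mf a b \<noteq> 0"
  proof
    assume "Mf a b = 0"
    then have "-a \<in> K" using Mf_props(1)[OF intK[OF a] b] by simp
    then show False using Kanti intK[OF a] int_nz[OF a] by blast
  qed
  ultimately show ?thesis by simp
qed

end

locale mainl = cone0 K for K :: "'a::real_normed_vector set" +
  fixes f :: "'a \<Rightarrow> 'a" and mu :: real and u :: 'a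
  assumes maps: "\<forall>x\<in>interior K. f x \<in> interior K"
  and mono: "\<forall>x\<in>interior K. \<forall>y\<in>interior K. y - x \<in> K \<longrightarrow> f y - f x \<in> K"
  and homog: "\<forall>x\<in>interior K. \<forall>t>0. f (t *\<^sub>R x) = t *\<^sub>R f x"
  and uint: "u \<in> interior K" and eig: "f u = mu *\<^sub>R u"
begin

lemma mu_pos: "mu > 0"
proof (rule ccontr)
  assume "\<not> mu > 0"
  then have "(-mu) *\<^sub>R u \<in> K" using Kscale[of "-mu" u] intK[OF uint] by simp
  then have "- f u \<in> K" using eig by simp
  moreover have "f u \<in> K" using maps uint intK by blast
  ultimately have "f u = 0" using Kanti by blast
  then show False using maps uint int_nz by metis
qed

definition c :: real where "c = inverse (1 + mu)"
definition T :: "'a \<Rightarrow> 'a" where "T y = c *\<^sub>R (f y + y)"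

lemma c_pos: "c > 0" using mu_pos by (simp add: c_def)

lemma T_int: "a \<in> interior K \<Longrightarrow> T a \<in> interior K"
  unfolding T_def using int_scale[OF c_pos] int_add maps intK by blast

lemma T_mono: "a \<in> interior K \<Longrightarrow> b \<in> interior K \<Longrightarrow> b - a \<in> K \<Longrightarrow> T b - T a \<in> K"
proof -
  assume a: "a \<in> interior K" and b: "b \<in> interior K" and ab: "b - a \<in> K"
  have "f b - f a \<in> K" using mono a b ab by blast
  then have "c *\<^sub>R ((f b - f a) + (b - a)) \<in> K" using Kadd[OF _ ab] Kscale c_pos by simp
  then show ?thesis unfolding T_def by (simp add: algebra_simps)
qed

lemma T_hom: "t > 0 \<Longrightarrow> a \<in> interior K \<Longrightarrow> T (t *\<^sub>R a) = t *\<^sub>R T a"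
  unfolding T_def using homog by (simp add: scaleR_add_right mult.commute)

lemma T_u: "T u = u"
proof -
  have "T u = (c * (1 + mu)) *\<^sub>R u" unfolding T_def eig by (simp add: algebra_simps)
  then show ?thesis using mu_pos by (simp add: c_def)
qed

lemma Tn_int: "a \<in> interior K \<Longrightarrow> (T ^^ n) a \<in> interior K"
  by (induction n) (auto simp: T_int)

lemma Tn_mono: "a \<in> interior K \<Longrightarrow> b \<in> interior K \<Longrightarrow> b - a \<in> K \<Longrightarrow> (T ^^ n) b - (T ^^ n) a \<in> K"
  by (induction n) (auto simp: T_mono Tn_int)

lemma Tn_hom: "t > 0 \<Longrightarrow> a \<in> interior K \<Longrightarrow> (T ^^ n) (t *\<^sub>R a) = t *\<^sub>R (T ^^ n) a"
  by (induction n) (auto simp: T_hom Tn_int)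

lemma Tn_u: "(T ^^ n) u = u"
  by (induction n) (auto simp: T_u)

lemma g_Tn: "x \<in> interior K \<Longrightarrow> ((\<lambda>y. f y + y) ^^ n) x = (1 + mu) ^ n *\<^sub>R (T ^^ n) x"
proof (induction n)
  case 0 then show ?case by simp
next
  case (Suc n)
  have pos: "(1 + mu) ^ n > 0" using mu_pos by simp
  have z: "(T ^^ n) x \<in> interior K" using Tn_int Suc.prems by blast
  have "((\<lambda>y. f y + y) ^^ Suc n) x = f ((1 + mu) ^ n *\<^sub>R (T ^^ n) x) + (1 + mu) ^ n *\<^sub>R (T ^^ n) x"
    using Suc by simp
  also have "\<dots> = (1 + mu) ^ n *\<^sub>R (f ((T ^^ n) x) + (T ^^ n) x)"
    using homog z pos by (simp add: scaleR_add_right)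
  also have "f ((T ^^ n) x) + (T ^^ n) x = (1 + mu) *\<^sub>R T ((T ^^ n) x)"
    unfolding T_def c_def using mu_pos by simp
  finally show ?case by simp
qed

lemma T_cprop:
  assumes a: "a \<in> interior K" and b: "b \<in> interior K" and R: "R > 0" and ab: "R *\<^sub>R b - a \<in> K"
  shows "(R *\<^sub>R T b - T a) - c *\<^sub>R (R *\<^sub>R b - a) \<in> K"
proof -
  have Rb: "R *\<^sub>R b \<in> interior K" using int_scale R b by blast
  have "f (R *\<^sub>R b) - f a \<in> K" using mono a Rb ab by blast
  then have "c *\<^sub>R (f (R *\<^sub>R b) - f a) \<in> K" using Kscale c_pos by simp
  moreover have "(R *\<^sub>R T b - T a) - c *\<^sub>R (R *\<^sub>R b - a) = c *\<^sub>R (f (R *\<^sub>R b) - f a)"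
    unfolding T_def using homog b R by (simp add: algebra_simps)
  ultimately show ?thesis by simp
qed

lemma close_Tn:
  assumes "a \<in> interior K" "b \<in> interior K" "R > 0" "R *\<^sub>R b - a \<in> K"
  shows "R *\<^sub>R (T ^^ n) b - (T ^^ n) a \<in> K"
  using Tn_mono[OF assms(1) int_scale[OF assms(3,2)] assms(4), of n] Tn_hom[OF assms(3,2)] by simp

lemma Mf_cmp:
  assumes "a \<in> interior K" "b \<in> interior K" "a' \<in> interior K" "b' \<in> interior K" "R > 0"
    "R *\<^sub>R a - a' \<in> K" "R *\<^sub>R b' - b \<in> K"
  shows "Mf a' b' \<le> R * R * Mf a b"
proof -
  have M: "Mf a b *\<^sub>R b - a \<in> K" "Mf a b \<ge> 0" using Mf_props intK assms by blast+
  have "(R * Mf a b) *\<^sub>R (R *\<^sub>R b' - b) \<in> K" using Kscale M(2) assms(5,7) by simp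
  moreover have "R *\<^sub>R (Mf a b *\<^sub>R b - a) \<in> K" using Kscale M(1) assms(5) by simp
  ultimately have "(R * Mf a b) *\<^sub>R (R *\<^sub>R b' - b) + R *\<^sub>R (Mf a b *\<^sub>R b - a) + (R *\<^sub>R a - a') \<in> K"
    using Kadd assms(6) by blast
  moreover have "(R * Mf a b) *\<^sub>R (R *\<^sub>R b' - b) + R *\<^sub>R (Mf a b *\<^sub>R b - a) + (R *\<^sub>R a - a')
     = (R * R * Mf a b) *\<^sub>R b' - a'" by (simp add: algebra_simps)
  ultimately show ?thesis using Mf_props(3) intK assms by metis
qed

lemma Mf_bdry:
  assumes a: "a \<in> K" and b: "b \<in> interior K"
  shows "Mf a b *\<^sub>R b - a \<notin> interior K"
proof
  assume z: "Mf a b *\<^sub>R b - a \<in> interior K"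
  obtain e where e: "e > 0" "\<And>v. norm v < e \<Longrightarrow> Mf a b *\<^sub>R b - a + v \<in> K" using int_ball[OF z] by blast
  define N where "N = norm b + 1"
  have N: "N > 0" unfolding N_def using norm_ge_zero[of b] by (smt (verit))
  define d where "d = e / (2 * N)"
  have d: "d > 0" unfolding d_def using e N by simp
  have "norm (- (d *\<^sub>R b)) = d * norm b" using d by simp
  also have "\<dots> < e"
  proof -
    have "d * norm b \<le> d * N" using d by (simp add: N_def)
    also have "\<dots> = e / 2" unfolding d_def using N by simp
    finally show ?thesis using e by simp
  qed
  finally have "Mf a b *\<^sub>R b - a + - (d *\<^sub>R b) \<in> K" using e by blast
  then have "(Mf a b - d) *\<^sub>R b - a \<in> K" by (simp add: algebra_simps)
  then have "Mf a b \<le> Mf a b - d" using Mf_props(3)[OF a b] by blast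
  then show False using d by simp
qed

lemma close_eventually:
  assumes y: "y \<in> interior K" and lim: "z \<longlonglongrightarrow> y" and R: "R > 1"
  shows "\<exists>N. \<forall>n\<ge>N. R *\<^sub>R y - z n \<in> K \<and> R *\<^sub>R z n - y \<in> K"
proof -
  obtain e where e: "e > 0" "\<And>v. norm v < e \<Longrightarrow> y + v \<in> K" using int_ball[OF y] by blast
  define d where "d = e * (R - 1) / R"
  have d: "d > 0" using e R by (simp add: d_def)
  obtain N where N: "\<And>n. n \<ge> N \<Longrightarrow> norm (z n - y) < d" using LIMSEQ_D[OF lim d] by blast
  have "R *\<^sub>R y - z n \<in> K \<and> R *\<^sub>R z n - y \<in> K" if n: "n \<ge> N" for n
  proof
    have nz: "norm (z n - y) < d" using N n by blast
    have "norm (inverse (R - 1) *\<^sub>R (y - z n)) = norm (z n - y) / (R - 1)"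
      using R by (simp add: norm_minus_commute divide_inverse mult.commute)
    also have "\<dots> < d / (R - 1)" using nz R by (simp add: divide_strict_right_mono)
    also have "d / (R - 1) = e / R" using R by (simp add: d_def)
    also have "\<dots> \<le> e" using R e by (simp add: divide_le_eq)
    finally have "y + inverse (R - 1) *\<^sub>R (y - z n) \<in> K" using e by blast
    then have "(R - 1) *\<^sub>R (y + inverse (R - 1) *\<^sub>R (y - z n)) \<in> K" using Kscale R by simp
    moreover have "(R - 1) *\<^sub>R (y + inverse (R - 1) *\<^sub>R (y - z n)) = R *\<^sub>R y - z n"
    proof -
      have "(R - 1) *\<^sub>R (y + inverse (R - 1) *\<^sub>R (y - z n)) = (R - 1) *\<^sub>R y + ((R - 1) * inverse (R - 1)) *\<^sub>R (y - z n)"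
        by (simp only: scaleR_add_right scaleR_scaleR)
      also have "(R - 1) * inverse (R - 1) = 1" using R by simp
      finally show ?thesis by (simp add: algebra_simps)
    qed
    ultimately show "R *\<^sub>R y - z n \<in> K" by simp
    have "norm ((R / (R - 1)) *\<^sub>R (z n - y)) = R / (R - 1) * norm (z n - y)"
      using R by simp
    also have "\<dots> < R / (R - 1) * d" using nz R by (intro mult_strict_left_mono) auto
    also have "R / (R - 1) * d = e" using R by (simp add: d_def)
    finally have "y + (R / (R - 1)) *\<^sub>R (z n - y) \<in> K" using e by blast
    then have "(R - 1) *\<^sub>R (y + (R / (R - 1)) *\<^sub>R (z n - y)) \<in> K" using Kscale R by simp
    moreover have "(R - 1) *\<^sub>R (y + (R / (R - 1)) *\<^sub>R (z n - y)) = R *\<^sub>R z n - y"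
    proof -
      have "(R - 1) *\<^sub>R (y + (R / (R - 1)) *\<^sub>R (z n - y)) = (R - 1) *\<^sub>R y + ((R - 1) * (R / (R - 1))) *\<^sub>R (z n - y)"
        by (simp only: scaleR_add_right scaleR_scaleR)
      also have "(R - 1) * (R / (R - 1)) = R" using R by simp
      finally show ?thesis by (simp add: algebra_simps)
    qed
    ultimately show "R *\<^sub>R z n - y \<in> K" by simp
  qed
  then show ?thesis by blast
qed

end

lemma RL1: fixes X Y :: real
  assumes "\<And>R e. 1 < R \<Longrightarrow> 0 < e \<Longrightarrow> X \<le> R * R * (Y + e)" shows "X \<le> Y"
proof -
  let ?g = "\<lambda>n. (1 + inverse (real (Suc n))) * (1 + inverse (real (Suc n))) * (Y + inverse (real (Suc n)))"
  have "?g \<longlonglongrightarrow> (1 + 0) * (1 + 0) * (Y + 0)"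
    by (intro tendsto_intros LIMSEQ_inverse_real_of_nat)
  then have "?g \<longlonglongrightarrow> Y" by simp
  moreover have "\<forall>n. X \<le> ?g n" using assms by simp
  ultimately show ?thesis using LIMSEQ_le_const by blast
qed

context mainl begin

lemma Tn_comp: "(T ^^ a) ((T ^^ b) x) = (T ^^ (a + b)) x"
  by (simp add: funpow_add)

lemma omega_Mf:
  assumes x: "x \<in> interior K" and y: "y \<in> interior K" and r: "strict_mono r"
    and lim: "((\<lambda>n. (T ^^ n) x) \<circ> r) \<longlonglongrightarrow> y"
  shows "Mf ((T ^^ (i + k1)) y) ((T ^^ (i + k2)) y) = Inf (range (\<lambda>n. Mf ((T ^^ (n + k1)) x) ((T ^^ (n + k2)) x)))"
proof -
  define xs where "xs n = (T ^^ n) x" for n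
  define s where "s n = Mf (xs (n + k1)) (xs (n + k2))" for n
  have xsi: "xs n \<in> interior K" for n unfolding xs_def using Tn_int x by blast
  have spos: "s n > 0" for n unfolding s_def using Mf_pos xsi by blast
  have sstep: "s (Suc n) \<le> s n" for n
  proof -
    have "s n *\<^sub>R xs (n + k2) - xs (n + k1) \<in> K" unfolding s_def using Mf_props(1) xsi intK by blast
    then have "s n *\<^sub>R (T ^^ 1) (xs (n + k2)) - (T ^^ 1) (xs (n + k1)) \<in> K"
      using close_Tn xsi spos by blast
    then have "s n *\<^sub>R xs (Suc n + k2) - xs (Suc n + k1) \<in> K" by (simp add: xs_def)
    then show ?thesis unfolding s_def[of "Suc n"] using Mf_props(3) xsi intK by blast
  qed
  have santi: "n \<le> m \<Longrightarrow> s m \<le> s n" for n m using lift_Suc_antimono_le[of s, OF sstep] by blast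
  have bdd: "bdd_below (range s)" using spos by (intro bdd_belowI[of _ 0]) (auto intro: less_imp_le)
  define L where "L = Inf (range s)"
  have Ls: "L \<le> s n" for n unfolding L_def using cInf_lower[OF _ bdd] by blast
  have Leps: "\<exists>N. s N < L + e" if "e > 0" for e
  proof -
    have "Inf (range s) < L + e" using that L_def by simp
    then show ?thesis using cInf_lessD[of "range s"] by blast
  qed
  define P where "P = Mf ((T ^^ (i + k1)) y) ((T ^^ (i + k2)) y)"
  have yi: "(T ^^ n) y \<in> interior K" for n using Tn_int y by blast
  have key: "P \<le> R * R * s N \<and> L \<le> R * R * P" if R: "R > 1" for R N
  proof -
    obtain J where J: "\<And>n. n \<ge> J \<Longrightarrow> R *\<^sub>R y - xs (r n) \<in> K \<and> R *\<^sub>R xs (r n) - y \<in> K"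
      using close_eventually[OF y lim R] by (auto simp: xs_def)
    define m where "m = r (max J N)"
    have mN: "m \<ge> N" "R *\<^sub>R y - xs m \<in> K" "R *\<^sub>R xs m - y \<in> K"
      unfolding m_def using seq_suble[OF r, of "max J N"] J[of "max J N"] by auto
    have xm: "xs m \<in> interior K" by (rule xsi)
    have sh: "(T ^^ (i + k)) (xs m) = xs (m + i + k)" for k by (simp add: xs_def Tn_comp algebra_simps)
    have c1: "R *\<^sub>R (T ^^ (i + k)) y - xs (m + i + k) \<in> K" for k
      using close_Tn[OF xm y _ mN(2), of "i + k"] R sh by simp
    have c2: "R *\<^sub>R xs (m + i + k) - (T ^^ (i + k)) y \<in> K" for k
      using close_Tn[OF y xm _ mN(3), of "i + k"] R sh by simp
    have Rp: "R > 0" using R by simp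
    have "P \<le> R * R * Mf (xs (m + i + k1)) (xs (m + i + k2))"
      unfolding P_def by (rule Mf_cmp[OF xsi xsi yi yi Rp c2 c1])
    also have "Mf (xs (m + i + k1)) (xs (m + i + k2)) = s (m + i)" by (simp add: s_def algebra_simps)
    also have "R * R * s (m + i) \<le> R * R * s N" using santi[of N "m + i"] mN(1) Rp by simp
    finally have 1: "P \<le> R * R * s N" .
    have "Mf (xs (m + i + k1)) (xs (m + i + k2)) \<le> R * R * P"
      unfolding P_def by (rule Mf_cmp[OF yi yi xsi xsi Rp c1 c2])
    moreover have "Mf (xs (m + i + k1)) (xs (m + i + k2)) = s (m + i)" by (simp add: s_def algebra_simps)
    ultimately have "s (m + i) \<le> R * R * P" by simp
    then have "L \<le> R * R * P" using Ls[of "m + i"] by simp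
    with 1 show ?thesis by blast
  qed
  have "P \<le> L"
  proof (rule RL1)
    fix R e :: real assume "1 < R" "0 < e"
    obtain N where "s N < L + e" using Leps \<open>0 < e\<close> by blast
    then have "R * R * s N \<le> R * R * (L + e)" using \<open>1 < R\<close> by simp
    then show "P \<le> R * R * (L + e)" using key[OF \<open>1 < R\<close>, of N] by simp
  qed
  moreover have "L \<le> P"
  proof (rule RL1)
    fix R e :: real assume "1 < R" "0 < e"
    have "P \<ge> 0" unfolding P_def using Mf_props(2) yi intK by blast
    have "R * R \<ge> 0" by simp
    then have "R * R * P \<le> R * R * (P + e)" using \<open>0 < e\<close> by (intro mult_left_mono) auto
    then show "L \<le> R * R * (P + e)" using key[OF \<open>1 < R\<close>, of 0] by simp
  qed
  ultimately show ?thesis unfolding P_def L_def s_def xs_def by simp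
qed

end

context mainl begin

lemma fwd_contra:
  assumes y: "y \<in> interior K" and P: "\<forall>i. Mf ((T ^^ Suc i) y) ((T ^^ i) y) = M" and M: "M > 1"
   and Bd: "\<forall>j. Mf ((T ^^ j) y) y \<le> Bd"
  shows False
proof -
  define b where "b i = (T ^^ i) y" for i
  have bi: "b i \<in> interior K" for i unfolding b_def using Tn_int y by blast
  have bS: "T (b i) = b (Suc i)" for i by (simp add: b_def)
  have Mp: "M > 0" using M by simp
  define z where "z i = M *\<^sub>R b i - b (Suc i)" for i
  have zK: "z i \<in> K" for i unfolding z_def using Mf_props(1)[OF intK[OF bi[of "Suc i"]] bi[of i]] P by (simp add: b_def)
  have zn: "z i \<notin> interior K" for i unfolding z_def using Mf_bdry[OF intK[OF bi[of "Suc i"]] bi[of i]] P by (simp add: b_def)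
  have zc: "z (Suc i) - c *\<^sub>R z i \<in> K" for i
    using T_cprop[OF bi[of "Suc i"] bi[of i] Mp zK[of i, unfolded z_def]] unfolding z_def bS by simp
  have cnz: "c \<noteq> 0" using c_pos by simp
  have ind: "\<exists>C>0. C *\<^sub>R z j - (M ^ Suc j *\<^sub>R b 0 - b (Suc j)) \<in> K" for j
  proof (induction j)
    case 0
    then show ?case using K0 by (intro exI[of _ 1]) (simp add: z_def)
  next
    case (Suc j)
    then obtain C where C: "C > 0" "C *\<^sub>R z j - (M ^ Suc j *\<^sub>R b 0 - b (Suc j)) \<in> K" by blast
    define C' where "C' = M * C / c + 1"
    have C'p: "C' > 0" unfolding C'_def using Mp C c_pos by (simp add: add_pos_pos)
    have e1: "(M * C / c) *\<^sub>R (z (Suc j) - c *\<^sub>R z j) \<in> K" using Kscale zc Mp C c_pos by simp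
    have e2: "M *\<^sub>R (C *\<^sub>R z j - (M ^ Suc j *\<^sub>R b 0 - b (Suc j))) \<in> K" using Kscale C Mp by simp
    have eq: "C' *\<^sub>R z (Suc j) - (M ^ Suc (Suc j) *\<^sub>R b 0 - b (Suc (Suc j)))
       = (M * C / c) *\<^sub>R (z (Suc j) - c *\<^sub>R z j) + M *\<^sub>R (C *\<^sub>R z j - (M ^ Suc j *\<^sub>R b 0 - b (Suc j)))"
    proof -
      have cc: "M * C / c * c = M * C" using cnz by simp
      have "(M * C / c) *\<^sub>R (z (Suc j) - c *\<^sub>R z j) = (M * C / c) *\<^sub>R z (Suc j) - (M * C) *\<^sub>R z j"
        by (simp only: scaleR_diff_right scaleR_scaleR cc)
      then show ?thesis unfolding C'_def by (simp add: z_def algebra_simps)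
    qed
    have "C' *\<^sub>R z (Suc j) - (M ^ Suc (Suc j) *\<^sub>R b 0 - b (Suc (Suc j))) \<in> K"
      unfolding eq by (rule Kadd[OF e1 e2])
    then show ?case using C'p by blast
  qed
  have wn: "M ^ Suc j *\<^sub>R b 0 - b (Suc j) \<notin> interior K" for j
  proof
    assume w: "M ^ Suc j *\<^sub>R b 0 - b (Suc j) \<in> interior K"
    obtain C where C: "C > 0" "C *\<^sub>R z j - (M ^ Suc j *\<^sub>R b 0 - b (Suc j)) \<in> K" using ind by blast
    have "C *\<^sub>R z j \<in> interior K" using int_add[OF w C(2)] by simp
    then have "inverse C *\<^sub>R (C *\<^sub>R z j) \<in> interior K" using int_scale[of "inverse C" "C *\<^sub>R z j"] C by simp
    then show False using zn C by simp
  qed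
  have low: "M ^ Suc j \<le> Bd" for j
  proof -
    let ?r = "Mf (b (Suc j)) (b 0)"
    have "M ^ Suc j \<le> ?r"
    proof (rule ccontr)
      assume "\<not> M ^ Suc j \<le> ?r"
      then have "M ^ Suc j - ?r > 0" by simp
      then have "(M ^ Suc j - ?r) *\<^sub>R b 0 \<in> interior K" using int_scale bi by blast
      moreover have "?r *\<^sub>R b 0 - b (Suc j) \<in> K" using Mf_props(1) bi intK by blast
      ultimately have "(M ^ Suc j - ?r) *\<^sub>R b 0 + (?r *\<^sub>R b 0 - b (Suc j)) \<in> interior K" using int_add by blast
      then show False using wn[of j] by (simp add: algebra_simps)
    qed
    also have "?r \<le> Bd" using Bd[rule_format, of "Suc j"] by (simp only: b_def funpow_0)
    finally show ?thesis .
  qed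
  obtain n where "Bd < M ^ n" using real_arch_pow[OF M] by blast
  moreover have "M ^ n \<le> M ^ Suc n" using M by simp
  ultimately show False using low[of n] by simp
qed

lemma rev_contra:
  assumes y: "y \<in> interior K" and P: "\<forall>i. Mf ((T ^^ i) y) ((T ^^ Suc i) y) = M" and M: "M > 1"
   and Bd: "\<forall>j. Mf y ((T ^^ j) y) \<le> Bd"
  shows False
proof -
  define b where "b i = (T ^^ i) y" for i
  have bi: "b i \<in> interior K" for i unfolding b_def using Tn_int y by blast
  have bS: "T (b i) = b (Suc i)" for i by (simp add: b_def)
  have Mp: "M > 0" using M by simp
  define z where "z i = M *\<^sub>R b (Suc i) - b i" for i
  have zK: "z i \<in> K" for i unfolding z_def using Mf_props(1)[OF intK[OF bi[of i]] bi[of "Suc i"]] P by (simp add: b_def)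
  have zn: "z i \<notin> interior K" for i unfolding z_def using Mf_bdry[OF intK[OF bi[of i]] bi[of "Suc i"]] P by (simp add: b_def)
  have zc: "z (Suc i) - c *\<^sub>R z i \<in> K" for i
    using T_cprop[OF bi[of i] bi[of "Suc i"] Mp zK[of i, unfolded z_def]] unfolding z_def bS by simp
  have cnz: "c \<noteq> 0" using c_pos by simp
  have ind: "\<exists>C>0. C *\<^sub>R z j - (M ^ Suc j *\<^sub>R b (Suc j) - b 0) \<in> K" for j
  proof (induction j)
    case 0
    then show ?case using K0 by (intro exI[of _ 1]) (simp add: z_def)
  next
    case (Suc j)
    then obtain C where C: "C > 0" "C *\<^sub>R z j - (M ^ Suc j *\<^sub>R b (Suc j) - b 0) \<in> K" by blast
    define C' where "C' = C / c + M ^ Suc j"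
    have C'p: "C' > 0" unfolding C'_def using Mp C c_pos by (simp add: add_pos_pos)
    have e1: "(C / c) *\<^sub>R (z (Suc j) - c *\<^sub>R z j) \<in> K" using Kscale zc C c_pos by simp
    have eq: "C' *\<^sub>R z (Suc j) - (M ^ Suc (Suc j) *\<^sub>R b (Suc (Suc j)) - b 0)
       = (C / c) *\<^sub>R (z (Suc j) - c *\<^sub>R z j) + (C *\<^sub>R z j - (M ^ Suc j *\<^sub>R b (Suc j) - b 0))"
    proof -
      have cc: "C / c * c = C" using cnz by simp
      have "(C / c) *\<^sub>R (z (Suc j) - c *\<^sub>R z j) = (C / c) *\<^sub>R z (Suc j) - C *\<^sub>R z j"
        by (simp only: scaleR_diff_right scaleR_scaleR cc)
      then show ?thesis unfolding C'_def by (simp add: z_def algebra_simps)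
    qed
    have "C' *\<^sub>R z (Suc j) - (M ^ Suc (Suc j) *\<^sub>R b (Suc (Suc j)) - b 0) \<in> K"
      unfolding eq by (rule Kadd[OF e1 C(2)])
    then show ?case using C'p by blast
  qed
  have wn: "M ^ Suc j *\<^sub>R b (Suc j) - b 0 \<notin> interior K" for j
  proof
    assume w: "M ^ Suc j *\<^sub>R b (Suc j) - b 0 \<in> interior K"
    obtain C where C: "C > 0" "C *\<^sub>R z j - (M ^ Suc j *\<^sub>R b (Suc j) - b 0) \<in> K" using ind by blast
    have "C *\<^sub>R z j \<in> interior K" using int_add[OF w C(2)] by simp
    then have "inverse C *\<^sub>R (C *\<^sub>R z j) \<in> interior K" using int_scale[of "inverse C" "C *\<^sub>R z j"] C by simp
    then show False using zn C by simp
  qed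
  have low: "M ^ Suc j \<le> Bd" for j
  proof -
    let ?r = "Mf (b 0) (b (Suc j))"
    have "M ^ Suc j \<le> ?r"
    proof (rule ccontr)
      assume "\<not> M ^ Suc j \<le> ?r"
      then have "M ^ Suc j - ?r > 0" by simp
      then have "(M ^ Suc j - ?r) *\<^sub>R b (Suc j) \<in> interior K" using int_scale bi by blast
      moreover have "?r *\<^sub>R b (Suc j) - b 0 \<in> K" using Mf_props(1) bi intK by blast
      ultimately have "(M ^ Suc j - ?r) *\<^sub>R b (Suc j) + (?r *\<^sub>R b (Suc j) - b 0) \<in> interior K" using int_add by blast
      then show False using wn[of j] by (simp add: algebra_simps)
    qed
    also have "?r \<le> Bd" using Bd[rule_format, of "Suc j"] by (simp only: b_def funpow_0)
    finally show ?thesis .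
  qed
  obtain n where "Bd < M ^ n" using real_arch_pow[OF M] by blast
  moreover have "M ^ n \<le> M ^ Suc n" using M by simp
  ultimately show False using low[of n] by simp
qed

end

context mainl begin

lemma close_norm:
  assumes C: "C \<ge> 0" "\<forall>a b. a \<in> K \<longrightarrow> b - a \<in> K \<longrightarrow> norm a \<le> C * norm b"
    and R: "R \<ge> 1" and h1: "R *\<^sub>R y - z \<in> K" and h2: "R *\<^sub>R z - y \<in> K"
  shows "norm (z - y) \<le> (2 * C + 1) * (R - 1) * norm y"
proof -
  have Rp: "R > 0" using R by simp
  define p where "p = inverse R *\<^sub>R (R *\<^sub>R z - y)"
  have pK: "p \<in> K" unfolding p_def using Kscale h2 Rp by simp
  have p_eq: "p = z - inverse R *\<^sub>R y" unfolding p_def using Rp by (simp add: algebra_simps)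
  have "(R - inverse R) *\<^sub>R y - p = R *\<^sub>R y - z" unfolding p_eq by (simp add: algebra_simps)
  then have "norm p \<le> C * norm ((R - inverse R) *\<^sub>R y)" using C(2) pK h1 by metis
  also have "\<dots> = C * (R - inverse R) * norm y"
  proof -
    have "inverse R \<le> 1" using R by (simp add: inverse_le_1_iff)
    then have "R - inverse R \<ge> 0" using R by linarith
    then show ?thesis by simp
  qed
  finally have np: "norm p \<le> C * (R - inverse R) * norm y" .
  have "z - y = p - (1 - inverse R) *\<^sub>R y" unfolding p_eq by (simp add: algebra_simps)
  then have "norm (z - y) \<le> norm p + norm ((1 - inverse R) *\<^sub>R y)" by (metis norm_triangle_ineq4)
  also have "norm ((1 - inverse R) *\<^sub>R y) = (1 - inverse R) * norm y"
  proof -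
    have "inverse R \<le> 1" using R by (simp add: inverse_le_1_iff)
    then show ?thesis by simp
  qed
  finally have 1: "norm (z - y) \<le> C * (R - inverse R) * norm y + (1 - inverse R) * norm y" using np by simp
  have iR: "inverse R \<le> 1" "inverse R > 0" using R by (auto simp: inverse_le_1_iff)
  have a: "R - inverse R \<le> 2 * (R - 1)"
  proof -
    have "R - inverse R = (R - 1) * (1 + inverse R)" using Rp by (simp add: algebra_simps)
    also have "\<dots> \<le> (R - 1) * 2" using iR R by (intro mult_left_mono) auto
    finally show ?thesis by simp
  qed
  have b: "1 - inverse R \<le> R - 1"
  proof -
    have "1 - inverse R = (R - 1) * inverse R" using Rp by (simp add: algebra_simps)
    also have "\<dots> \<le> (R - 1) * 1" using iR R by (intro mult_left_mono) auto
    finally show ?thesis by simp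
  qed
  have "C * (R - inverse R) * norm y \<le> C * (2 * (R - 1)) * norm y"
    using a C(1) by (intro mult_right_mono mult_left_mono) auto
  moreover have "(1 - inverse R) * norm y \<le> (R - 1) * norm y" using b by (intro mult_right_mono) auto
  ultimately have "norm (z - y) \<le> C * (2 * (R - 1)) * norm y + (R - 1) * norm y" using 1 by linarith
  also have "\<dots> = (2 * C + 1) * (R - 1) * norm y" by (simp add: algebra_simps)
  finally show ?thesis .
qed

lemma limit_fixed:
  assumes x: "x \<in> interior K"
  shows "\<exists>y\<in>interior K. T y = y \<and> (\<lambda>n. (T ^^ n) x) \<longlonglongrightarrow> y"
proof -
  define xs where "xs n = (T ^^ n) x" for n
  have xsi: "xs n \<in> interior K" for n unfolding xs_def using Tn_int x by blast
  define Mx where "Mx = Mf x u"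
  define Mx' where "Mx' = Mf u x"
  have Mxp: "Mx > 0" "Mx' > 0" unfolding Mx_def Mx'_def using Mf_pos x uint by blast+
  have hx1: "Mx *\<^sub>R u - x \<in> K" unfolding Mx_def using Mf_props(1) intK x uint by blast
  have hx2: "Mx' *\<^sub>R x - u \<in> K" unfolding Mx'_def using Mf_props(1) intK x uint by blast
  have h1: "Mx *\<^sub>R u - xs n \<in> K" for n
    using close_Tn[OF x uint Mxp(1) hx1, of n] Tn_u by (simp add: xs_def)
  have h2: "Mx' *\<^sub>R xs n - u \<in> K" for n
    using close_Tn[OF uint x Mxp(2) hx2, of n] Tn_u by (simp add: xs_def)
  obtain C where C: "C > 0" "\<forall>a b. a \<in> K \<longrightarrow> b - a \<in> K \<longrightarrow> norm a \<le> C * norm b" using normal by blast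
  have "norm (xs n) \<le> C * norm (Mx *\<^sub>R u)" for n using C(2) h1 xsi intK by blast
  then have "bounded (range xs)" by (metis bounded_iff rangeE)
  then obtain r y where r: "strict_mono r" "(xs \<circ> r) \<longlonglongrightarrow> y" using bw_fin[OF fd] by blast
  have lim1: "(\<lambda>n. Mx *\<^sub>R u - xs (r n)) \<longlonglongrightarrow> Mx *\<^sub>R u - y" using r(2) by (intro tendsto_intros) (simp add: o_def)
  have "\<And>n. (\<lambda>n. Mx *\<^sub>R u - xs (r n)) n \<in> K" using h1 by simp
  from closed_sequentially[OF clo this lim1] have hy1: "Mx *\<^sub>R u - y \<in> K" .
  have lim2: "(\<lambda>n. Mx' *\<^sub>R xs (r n) - u) \<longlonglongrightarrow> Mx' *\<^sub>R y - u" using r(2) by (intro tendsto_intros) (simp add: o_def)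
  have "\<And>n. (\<lambda>n. Mx' *\<^sub>R xs (r n) - u) n \<in> K" using h2 by simp
  from closed_sequentially[OF clo this lim2] have hy2: "Mx' *\<^sub>R y - u \<in> K" .
  have "u + (Mx' *\<^sub>R y - u) \<in> interior K" using int_add[OF uint hy2] .
  then have "Mx' *\<^sub>R y \<in> interior K" by simp
  then have "inverse Mx' *\<^sub>R (Mx' *\<^sub>R y) \<in> interior K" using int_scale[of "inverse Mx'" "Mx' *\<^sub>R y"] Mxp by simp
  then have y: "y \<in> interior K" using Mxp by simp
  have yi: "(T ^^ n) y \<in> interior K" for n using Tn_int y by blast
  have xs_eq: "xs = (\<lambda>n. (T ^^ n) x)" by (rule ext) (simp add: xs_def)
  have lim: "((\<lambda>n. (T ^^ n) x) \<circ> r) \<longlonglongrightarrow> y" using r(2) by (simp add: xs_eq)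
  define M1 where "M1 = Mf ((T ^^ Suc 0) y) ((T ^^ 0) y)"
  have P1: "\<forall>i. Mf ((T ^^ Suc i) y) ((T ^^ i) y) = M1"
  proof
    fix i
    have "Mf ((T ^^ (i + 1)) y) ((T ^^ (i + 0)) y) = Mf ((T ^^ (0 + 1)) y) ((T ^^ (0 + 0)) y)"
      using omega_Mf[OF x y r(1) lim, of i 1 0] omega_Mf[OF x y r(1) lim, of 0 1 0] by simp
    then show "Mf ((T ^^ Suc i) y) ((T ^^ i) y) = M1" unfolding M1_def by simp
  qed
  have B1: "\<forall>j. Mf ((T ^^ j) y) y \<le> Mx * Mf u y"
  proof
    fix j
    have a: "Mx *\<^sub>R u - (T ^^ j) y \<in> K" using close_Tn[OF y uint Mxp(1) hy1, of j] Tn_u by simp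
    have "Mf u y *\<^sub>R y - u \<in> K" "Mf u y \<ge> 0" using Mf_props intK uint y by blast+
    then have b: "Mx *\<^sub>R (Mf u y *\<^sub>R y - u) \<in> K" using Kscale Mxp by simp
    have eq: "(Mx * Mf u y) *\<^sub>R y - (T ^^ j) y = Mx *\<^sub>R (Mf u y *\<^sub>R y - u) + (Mx *\<^sub>R u - (T ^^ j) y)"
      by (simp add: algebra_simps)
    have "(Mx * Mf u y) *\<^sub>R y - (T ^^ j) y \<in> K" unfolding eq by (rule Kadd[OF b a])
    then show "Mf ((T ^^ j) y) y \<le> Mx * Mf u y" using Mf_props(3) intK yi y by blast
  qed
  have "\<not> M1 > 1" using fwd_contra[OF y P1 _ B1] by blast
  then have M1: "M1 \<le> 1" by simp
  have "M1 *\<^sub>R y - T y \<in> K" using Mf_props(1)[OF intK[OF yi[of 1]] y] unfolding M1_def by simp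
  moreover have "(1 - M1) *\<^sub>R y \<in> K" using Kscale M1 intK[OF y] by simp
  ultimately have "(1 - M1) *\<^sub>R y + (M1 *\<^sub>R y - T y) \<in> K" using Kadd by blast
  then have d1: "y - T y \<in> K" by (simp add: algebra_simps)
  define M2 where "M2 = Mf ((T ^^ 0) y) ((T ^^ Suc 0) y)"
  have P2: "\<forall>i. Mf ((T ^^ i) y) ((T ^^ Suc i) y) = M2"
  proof
    fix i
    have "Mf ((T ^^ (i + 0)) y) ((T ^^ (i + 1)) y) = Mf ((T ^^ (0 + 0)) y) ((T ^^ (0 + 1)) y)"
      using omega_Mf[OF x y r(1) lim, of i 0 1] omega_Mf[OF x y r(1) lim, of 0 0 1] by simp
    then show "Mf ((T ^^ i) y) ((T ^^ Suc i) y) = M2" unfolding M2_def by simp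
  qed
  have B2: "\<forall>j. Mf y ((T ^^ j) y) \<le> Mf y u * Mx'"
  proof
    fix j
    have a: "Mx' *\<^sub>R (T ^^ j) y - u \<in> K" using close_Tn[OF uint y Mxp(2) hy2, of j] Tn_u by simp
    have "Mf y u *\<^sub>R u - y \<in> K" "Mf y u \<ge> 0" using Mf_props intK uint y by blast+
    moreover have b: "Mf y u *\<^sub>R (Mx' *\<^sub>R (T ^^ j) y - u) \<in> K" using Kscale a \<open>Mf y u \<ge> 0\<close> by simp
    ultimately have "Mf y u *\<^sub>R (Mx' *\<^sub>R (T ^^ j) y - u) + (Mf y u *\<^sub>R u - y) \<in> K" using Kadd by blast
    moreover have eq: "(Mf y u * Mx') *\<^sub>R (T ^^ j) y - y = Mf y u *\<^sub>R (Mx' *\<^sub>R (T ^^ j) y - u) + (Mf y u *\<^sub>R u - y)"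
      by (simp add: algebra_simps)
    ultimately have "(Mf y u * Mx') *\<^sub>R (T ^^ j) y - y \<in> K" by (simp only: eq)
    then show "Mf y ((T ^^ j) y) \<le> Mf y u * Mx'" using Mf_props(3) intK yi y by blast
  qed
  have "\<not> M2 > 1" using rev_contra[OF y P2 _ B2] by blast
  then have M2: "M2 \<le> 1" by simp
  have "M2 *\<^sub>R T y - y \<in> K" using Mf_props(1)[OF intK[OF y] yi[of 1]] unfolding M2_def by simp
  moreover have "(1 - M2) *\<^sub>R T y \<in> K" using Kscale M2 intK[OF yi[of 1]] by simp
  ultimately have "(1 - M2) *\<^sub>R T y + (M2 *\<^sub>R T y - y) \<in> K" using Kadd by blast
  then have d2: "T y - y \<in> K" by (simp add: algebra_simps)
  have fixy: "T y = y" using Kanti[OF d2] d1 by simp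
  have Tny: "(T ^^ n) y = y" for n by (induction n) (simp_all add: fixy)
  have "xs \<longlonglongrightarrow> y"
  proof (rule LIMSEQ_I)
    fix e :: real assume e: "e > 0"
    define D where "D = (2 * C + 1) * (norm y + 1)"
    have ny: "norm y + 1 > 0" using norm_ge_zero[of y] by (smt (verit))
    have "2 * C + 1 > 0" using C(1) by simp
    then have Dp: "D > 0" unfolding D_def using ny by (rule mult_pos_pos)
    define R where "R = 1 + e / (2 * D)"
    have R: "R > 1" unfolding R_def using e Dp by simp
    obtain J where J: "\<And>n. n \<ge> J \<Longrightarrow> R *\<^sub>R y - xs (r n) \<in> K \<and> R *\<^sub>R xs (r n) - y \<in> K"
      using close_eventually[OF y r(2) R] by (auto simp: o_def)
    have "norm (xs n - y) < e" if n: "n \<ge> r J" for n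
    proof -
      have eqn: "xs n = (T ^^ (n - r J)) (xs (r J))" using n by (simp add: xs_def Tn_comp)
      have a1: "R *\<^sub>R y - xs n \<in> K"
        using close_Tn[OF xsi y _ conjunct1[OF J[OF order_refl]], of "n - r J"] R eqn Tny by simp
      have a2: "R *\<^sub>R xs n - y \<in> K"
        using close_Tn[OF y xsi _ conjunct2[OF J[OF order_refl]], of "n - r J"] R eqn Tny by simp
      have "norm (xs n - y) \<le> (2 * C + 1) * (R - 1) * norm y"
        using close_norm[OF _ C(2) _ a1 a2] C(1) R by simp
      also have "\<dots> \<le> (2 * C + 1) * (R - 1) * (norm y + 1)"
        using C(1) R by (intro mult_left_mono) auto
      also have "\<dots> = e / 2" unfolding R_def D_def using Dp D_def by (simp add: field_simps)
      also have "\<dots> < e" using e by simp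
      finally show ?thesis .
    qed
    then show "\<exists>no. \<forall>n\<ge>no. norm (xs n - y) < e" by blast
  qed
  then show ?thesis using y fixy by (auto simp: xs_eq)
qed

end

theorem theorem6p3:
  fixes K :: "'a::real_normed_vector set" and f :: "'a \<Rightarrow> 'a"
  assumes fin: "fin_dim_space TYPE('a)"
    and poly: "polyhedral_cone K"
    and int_ne: "interior K \<noteq> {}"
    and maps: "\<forall>x\<in>interior K. f x \<in> interior K"
    and mono: "\<forall>x\<in>interior K. \<forall>y\<in>interior K. cone_le K x y \<longrightarrow> cone_le K (f x) (f y)"
    and homog: "\<forall>x\<in>interior K. \<forall>t>0. f (t *\<^sub>R x) = t *\<^sub>R f x"
    and eig: "\<exists>v\<in>interior K. \<exists>\<mu>. f v = \<mu> *\<^sub>R v"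
  shows "\<forall>x\<in>interior K. \<exists>v\<in>interior K. (\<exists>\<mu>. f v = \<mu> *\<^sub>R v) \<and>
           (\<lambda>k. ((\<lambda>y. f y + y) ^^ k) x /\<^sub>R norm (((\<lambda>y. f y + y) ^^ k) x)) \<longlonglongrightarrow> v"
proof -
  have cc: "closed K" "convex K" "\<forall>t>0. (\<lambda>x. t *\<^sub>R x) ` K \<subseteq> K" "K \<inter> uminus ` K = {0}"
    using poly unfolding polyhedral_cone_def closed_cone_def by auto
  show ?thesis
  proof (cases "0 \<in> interior K")
    case True
    then obtain e where e: "e > 0" "ball 0 e \<subseteq> K" using mem_interior by blast
    have inK: "z \<in> K" for z
    proof (cases "z = 0")
      case True
      then show ?thesis using e by auto
    next
      case False
      define t where "t = e / (2 * norm z)"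
      have t: "t > 0" using e False by (simp add: t_def)
      have "norm (t *\<^sub>R z) < e" using e False t by (simp add: t_def)
      then have "t *\<^sub>R z \<in> K" using e by (auto simp: dist_norm)
      then have "inverse t *\<^sub>R (t *\<^sub>R z) \<in> K" using cc(3) t by (meson image_subset_iff inverse_positive_iff_positive)
      then show ?thesis using t by simp
    qed
    have allz: "z = 0" for z :: 'a
    proof -
      have "z \<in> uminus ` K" using inK[of "-z"] by (metis image_eqI minus_minus)
      then show ?thesis using inK[of z] cc(4) by blast
    qed
    show ?thesis
    proof
      fix x assume "x \<in> interior K"
      have "(\<lambda>k. ((\<lambda>y. f y + y) ^^ k) x /\<^sub>R norm (((\<lambda>y. f y + y) ^^ k) x)) = (\<lambda>k. 0)"
        by (rule ext) (rule allz)
      moreover have "f 0 = 1 *\<^sub>R 0" using allz[of "f 0"] by simp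
      ultimately show "\<exists>v\<in>interior K. (\<exists>\<mu>. f v = \<mu> *\<^sub>R v) \<and>
           (\<lambda>k. ((\<lambda>y. f y + y) ^^ k) x /\<^sub>R norm (((\<lambda>y. f y + y) ^^ k) x)) \<longlonglongrightarrow> v"
        using True by (intro bexI[of _ 0]) auto
    qed
  next
    case False
    interpret cone0 K using fin cc False by unfold_locales auto
    obtain u \<mu> where u: "u \<in> interior K" "f u = \<mu> *\<^sub>R u" using eig by blast
    interpret M: mainl K f \<mu> u
      using maps mono homog u by unfold_locales (auto simp: cone_le_def)
    show ?thesis
    proof
      fix x assume x: "x \<in> interior K"
      obtain y where y: "y \<in> interior K" "M.T y = y" "(\<lambda>n. (M.T ^^ n) x) \<longlonglongrightarrow> y"
        using M.limit_fixed[OF x] by blast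
      have ny: "norm y > 0" using int_nz[OF y(1)] by simp
      define v where "v = inverse (norm y) *\<^sub>R y"
      have v: "v \<in> interior K" unfolding v_def using int_scale ny y(1) by simp
      have "M.c *\<^sub>R (f y + y) = y" using y(2) unfolding M.T_def .
      then have "(1 + \<mu>) *\<^sub>R (M.c *\<^sub>R (f y + y)) = (1 + \<mu>) *\<^sub>R y" by simp
      moreover have "(1 + \<mu>) * M.c = 1" unfolding M.c_def using M.mu_pos by simp
      ultimately have "f y + y = (1 + \<mu>) *\<^sub>R y" by (simp add: scaleR_scaleR)
      then have fy: "f y = \<mu> *\<^sub>R y" by (simp add: algebra_simps)
      have fv: "f v = \<mu> *\<^sub>R v" unfolding v_def using homog y(1) ny fy by simp
      have seq: "((\<lambda>y. f y + y) ^^ k) x /\<^sub>R norm (((\<lambda>y. f y + y) ^^ k) x)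
          = (M.T ^^ k) x /\<^sub>R norm ((M.T ^^ k) x)" for k
      proof -
        have p: "(1 + \<mu>) ^ k > 0" using M.mu_pos by simp
        then have "(1 + \<mu>) ^ k \<noteq> 0" by (rule not_sym[OF less_imp_neq])
        then have "inverse ((1 + \<mu>) ^ k) * (1 + \<mu>) ^ k = 1" by (rule left_inverse)
        then show ?thesis unfolding M.g_Tn[OF x, of k] using p by simp
      qed
      have "(\<lambda>k. (M.T ^^ k) x /\<^sub>R norm ((M.T ^^ k) x)) \<longlonglongrightarrow> y /\<^sub>R norm y"
        using y(3) ny by (intro tendsto_intros) auto
      then have "(\<lambda>k. ((\<lambda>y. f y + y) ^^ k) x /\<^sub>R norm (((\<lambda>y. f y + y) ^^ k) x)) \<longlonglongrightarrow> v"
        unfolding seq v_def by simp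
      then show "\<exists>v\<in>interior K. (\<exists>\<mu>. f v = \<mu> *\<^sub>R v) \<and>
           (\<lambda>k. ((\<lambda>y. f y + y) ^^ k) x /\<^sub>R norm (((\<lambda>y. f y + y) ^^ k) x)) \<longlonglongrightarrow> v"
        using v fv by blast
    qed
  qed
qed

end
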